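(* Let $1\le p<q$ and $u=0^{q-p}1^p$. Then $$\mathcal{S}_{q-p}(u)=\sum_{j=1}^{q}\min(j-1,\;p,\;q-p,\;q+1-j)\,2^{q-j}.$$
   Context: For a word $x=x_1\cdots x_n$ over $\{0,1\}$, $(x)_2=\sum_{i=1}^n x_i2^{n-i}$. For $w\in\{0,1\}^q$, $\mathcal{O}_1(w)\le\dots\le\mathcal{O}_q(w)$ are the $q$ cyclic shifts $w,\sigma(w),\dots,\sigma^{q-1}(w)$ (where $\sigma(w_1\cdots w_n)=w_2\cdots w_nw_1$) sorted lexicographically with $0<1$, $\mathcal{I}_k(w)=(\mathcal{O}_k(w))_2$, and $\mathcal{S}_i(w)=\sum_{k=1}^i\mathcal{I}_k(w)$. *)

theory Defs
  imports Main "HOL-Library.List_Lexorder"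
begin

text \<open>Binary words are lists of naturals over {0,1}. For words of equal length the
lexicographic order of List_Lexorder (with 0 < 1) is the usual lexicographic order.\<close>

definition bin_val :: "nat list \<Rightarrow> nat" where
  "bin_val x = (\<Sum>i<length x. x ! i * 2 ^ (length x - 1 - i))"

text \<open>The cyclic shift sigma(w1...wn) = w2...wn w1 is rotate1; sigma^k = rotate k.\<close>
definition sorted_shifts :: "nat list \<Rightarrow> nat list list" where
  "sorted_shifts w = sort (map (\<lambda>k. rotate k w) [0..<length w])"

definition O_shift :: "nat list \<Rightarrow> nat \<Rightarrow> nat list" where
  "O_shift w k = sorted_shifts w ! (k - 1)"

definition I_val :: "nat list \<Rightarrow> nat \<Rightarrow> nat" where
  "I_val w k = bin_val (O_shift w k)"

definition S_sum :: "nat list \<Rightarrow> nat \<Rightarrow> nat" where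
  "S_sum w i = (\<Sum>k=1..i. I_val w k)"

end

theory Submission
  imports Defs "HOL-Library.Multiset"
begin

lemma lt01: "(u @ (0::nat) # v) < u @ 1 # w"
  by (induct u) auto

definition A :: "nat \<Rightarrow> nat \<Rightarrow> nat \<Rightarrow> nat list" where
  "A m p k = replicate (m-k) 0 @ replicate p 1 @ replicate k 0"
definition B :: "nat \<Rightarrow> nat \<Rightarrow> nat \<Rightarrow> nat list" where
  "B m p i = replicate (p-i) 1 @ replicate m 0 @ replicate i 1"

lemma rotA: "k \<le> m \<Longrightarrow> rotate k (replicate m 0 @ replicate p 1) = A m p k"
proof -
  assume "k \<le> m"
  then have "replicate m (0::nat) @ replicate p 1 = replicate k 0 @ (replicate (m-k) 0 @ replicate p 1)"
    by (metis append_assoc le_add_diff_inverse replicate_add)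
  then show ?thesis unfolding A_def by (metis append_assoc length_replicate rotate_append)
qed

lemma rotB: "i \<le> p \<Longrightarrow> rotate (m+i) (replicate m 0 @ replicate p 1) = B m p i"
proof -
  assume "i \<le> p"
  then have "replicate m (0::nat) @ replicate p 1 = (replicate m 0 @ replicate i 1) @ replicate (p-i) 1"
    by (metis append_assoc le_add_diff_inverse replicate_add)
  then show ?thesis unfolding B_def by (metis append_assoc length_append length_replicate rotate_append)
qed

lemma A_lt: assumes "i < j" "j < m" "1 \<le> p" shows "A m p i < A m p j"
proof -
  have "A m p i = replicate (m-j) 0 @ 0 # (replicate (j-i-1) 0 @ replicate p 1 @ replicate i 0)"
  proof -
    have "m - i = (m-j) + Suc (j-i-1)" using assms by simp
    then show ?thesis unfolding A_def by (simp only: replicate_add replicate_Suc) simp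
  qed
  moreover have "A m p j = replicate (m-j) 0 @ 1 # (replicate (p-1) 1 @ replicate j 0)"
  proof -
    have "p = Suc (p-1)" using assms by simp
    then show ?thesis unfolding A_def by (metis append.assoc append_Cons replicate_Suc append.left_neutral)
  qed
  ultimately show ?thesis using lt01 by metis
qed

lemma B_lt: assumes "i < j" "j < p" "1 \<le> m" shows "B m p j < B m p i"
proof -
  have "B m p i = replicate (p-j) 1 @ 1 # (replicate (j-i-1) 1 @ replicate m 0 @ replicate i 1)"
  proof -
    have "p - i = (p-j) + Suc (j-i-1)" using assms by simp
    then show ?thesis unfolding B_def by (simp only: replicate_add replicate_Suc) simp
  qed
  moreover have "B m p j = replicate (p-j) 1 @ 0 # (replicate (m-1) 0 @ replicate j 1)"
  proof -
    have "m = Suc (m-1)" using assms by simp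
    then show ?thesis unfolding B_def by (metis append_Cons replicate_Suc append.left_neutral)
  qed
  ultimately show ?thesis using lt01 by metis
qed

lemma AB_lt: assumes "i < m" "j < p" shows "A m p i < B m p j"
proof -
  have "A m p i = [] @ 0 # (replicate (m-i-1) 0 @ replicate p 1 @ replicate i 0)"
    using assms unfolding A_def by (cases "m-i") auto
  moreover have "B m p j = [] @ 1 # (replicate (p-j-1) 1 @ replicate m 0 @ replicate j 1)"
    using assms unfolding B_def by (cases "p-j") auto
  ultimately show ?thesis using lt01 by metis
qed

lemma sort_eq:
  assumes "1 \<le> p" "1 \<le> m"
  shows "sorted_shifts (replicate m 0 @ replicate p 1) = map (A m p) [0..<m] @ map (B m p) (rev [0..<p])"
proof -
  let ?u = "replicate m (0::nat) @ replicate p 1"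
  let ?f = "\<lambda>k. rotate k ?u"
  have e1: "map ?f [0..<m+p] = map ?f [0..<m] @ map ?f [m..<m+p]"
    by (simp only: upt_add_eq_append[OF le0] map_append)
  have e2: "map ?f [0..<m] = map (A m p) [0..<m]"
    by (rule map_cong, rule refl, rule rotA, simp)
  have e3: "[m..<m+p] = map (\<lambda>i. m + i) [0..<p]"
    using map_add_upt[of m p] by (simp add: add.commute)
  have e4: "map ?f (map (\<lambda>i. m + i) [0..<p]) = map (B m p) [0..<p]"
    unfolding map_map by (rule map_cong, rule refl, unfold comp_def, rule rotB, simp)
  have e: "map ?f [0..<m+p] = map (A m p) [0..<m] @ map (B m p) [0..<p]"
    using e1 e2 e3 e4 by simp
  have ms: "mset (map (A m p) [0..<m] @ map (B m p) (rev [0..<p])) = mset (map ?f [0..<m+p])"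
    unfolding e by (simp add: rev_map[symmetric])
  have s1: "sorted (map (A m p) [0..<m])"
    unfolding sorted_iff_nth_mono_less
  proof (intro allI impI)
    fix i j assume "i < j" "j < length (map (A m p) [0..<m])"
    then show "map (A m p) [0..<m] ! i \<le> map (A m p) [0..<m] ! j"
      using A_lt[of i j m p] assms by simp
  qed
  have s2: "sorted (map (B m p) (rev [0..<p]))"
    unfolding sorted_iff_nth_mono_less
  proof (intro allI impI)
    fix i j assume "i < j" "j < length (map (B m p) (rev [0..<p]))"
    then show "map (B m p) (rev [0..<p]) ! i \<le> map (B m p) (rev [0..<p]) ! j"
      using B_lt[of "p - Suc j" "p - Suc i" p m] assms
      by (simp add: rev_nth less_imp_le diff_less_mono2)
  qed
  have s3: "\<forall>x\<in>set (map (A m p) [0..<m]). \<forall>y\<in>set (map (B m p) (rev [0..<p])). x \<le> y"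
    using AB_lt[of _ m _ p] by fastforce
  have so: "sorted (map (A m p) [0..<m] @ map (B m p) (rev [0..<p]))"
    using s1 s2 s3 by (simp only: sorted_append)
  have l: "length ?u = m+p" by simp
  show ?thesis unfolding sorted_shifts_def l by (rule properties_for_sort[OF ms so])
qed


lemma bin_val_Cons: "bin_val (x#xs) = x * 2 ^ length xs + bin_val xs"
  unfolding bin_val_def length_Cons sum.lessThan_Suc_shift by simp

lemma bin_val_append: "bin_val (xs @ ys) = bin_val xs * 2 ^ length ys + bin_val ys"
proof (induct xs)
  case Nil then show ?case by (simp add: bin_val_def)
next
  case (Cons x xs) then show ?case by (simp add: bin_val_Cons power_add algebra_simps)
qed

lemma bin_val_rep0: "bin_val (replicate n 0) = 0"
  by (induct n) (simp add: bin_val_def, simp add: bin_val_Cons)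

lemma bin_val_rep1: "bin_val (replicate n 1) + 1 = 2 ^ n"
  by (induct n) (simp add: bin_val_def, simp add: bin_val_Cons)

lemma bin_val_A: "bin_val (A m p k) = (2^p - 1) * 2^k"
  using bin_val_rep1[of p] unfolding A_def
  by (simp add: bin_val_append bin_val_rep0)

lemma geo: "(\<Sum>k<n. (2::nat)^k) + 1 = 2^n"
  by (induct n) auto

lemma card_c: assumes "s < p + m"
  shows "card {a\<in>{..<p}. a \<le> s \<and> s < a + m} = min (min (p + m - s - 1) p) (min m (s+1))"
proof -
  have "{a\<in>{..<p}. a \<le> s \<and> s < a + m} = {s+1-m ..< min p (s+1)}" by auto
  then show ?thesis using assms by simp
qed

lemma conv: "(\<Sum>a<p. (2::nat)^a) * (\<Sum>b<m. 2^b) =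
   (\<Sum>s<p+m. card {a\<in>{..<p}. a \<le> s \<and> s < a + m} * 2^s)"
proof -
  have inner: "(\<Sum>b<m. (2::nat)^(a+b)) = (\<Sum>s<p+m. if a \<le> s \<and> s < a + m then 2^s else 0)"
    if "a < p" for a
  proof -
    have "(\<Sum>b<m. (2::nat)^(a+b)) = (\<Sum>s\<in>{a..<a+m}. 2^s)"
      by (rule sum.reindex_bij_witness[of _ "\<lambda>s. s - a" "\<lambda>b. a + b"]) auto
    also have "{a..<a+m} = {s\<in>{..<p+m}. a \<le> s \<and> s < a + m}" using that by auto
    also have "(\<Sum>s\<in>{s\<in>{..<p+m}. a \<le> s \<and> s < a + m}. (2::nat)^s) =
       (\<Sum>s<p+m. if a \<le> s \<and> s < a + m then 2^s else 0)"
      by (rule sum.inter_filter) simp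
    finally show ?thesis .
  qed
  have "(\<Sum>a<p. (2::nat)^a) * (\<Sum>b<m. 2^b) = (\<Sum>a<p. \<Sum>b<m. 2^(a+b))"
    by (simp add: sum_product power_add)
  also have "\<dots> = (\<Sum>a<p. \<Sum>s<p+m. if a \<le> s \<and> s < a + m then 2^s else 0)"
    using inner by simp
  also have "\<dots> = (\<Sum>s<p+m. \<Sum>a<p. if a \<le> s \<and> s < a + m then 2^s else 0)"
    by (rule sum.swap)
  also have "\<dots> = (\<Sum>s<p+m. card {a\<in>{..<p}. a \<le> s \<and> s < a + m} * 2^s)"
  proof (rule sum.cong[OF refl])
    fix s
    have "(\<Sum>a<p. if a \<le> s \<and> s < a + m then (2::nat)^s else 0) =
          (\<Sum>a\<in>{a\<in>{..<p}. a \<le> s \<and> s < a + m}. 2^s)"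
      by (rule sum.inter_filter[symmetric]) simp
    then show "(\<Sum>a<p. if a \<le> s \<and> s < a + m then (2::nat)^s else 0) =
          card {a\<in>{..<p}. a \<le> s \<and> s < a + m} * 2^s" by simp
  qed
  finally show ?thesis .
qed

theorem mainTheorem5:
  fixes p q :: nat
  assumes "1 \<le> p" and "p < q"
  shows "S_sum (replicate (q - p) 0 @ replicate p 1) (q - p) =
         (\<Sum>j=1..q. min (min (j - 1) p) (min (q - p) (q + 1 - j)) * 2 ^ (q - j))"
proof -
  define m where "m = q - p"
  have m1: "1 \<le> m" and q: "q = p + m" using assms unfolding m_def by auto
  have "S_sum (replicate m 0 @ replicate p 1) m = (\<Sum>k=1..m. (2^p - 1) * 2^(k-1))"
    unfolding S_sum_def I_val_def O_shift_def sort_eq[OF assms(1) m1]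
    by (rule sum.cong[OF refl]) (auto simp: nth_append bin_val_A)
  also have "\<dots> = (\<Sum>k<m. (2^p - 1) * 2^k)"
    by (rule sum.reindex_bij_witness[of _ "\<lambda>k. k + 1" "\<lambda>k. k - 1"]) auto
  also have "\<dots> = (\<Sum>a<p. (2::nat)^a) * (\<Sum>b<m. 2^b)"
  proof -
    have "(2::nat)^p - 1 = (\<Sum>a<p. 2^a)" using geo[of p] by linarith
    then show ?thesis by (simp add: sum_distrib_left)
  qed
  also have "\<dots> = (\<Sum>s<p+m. card {a\<in>{..<p}. a \<le> s \<and> s < a + m} * 2^s)"
    by (rule conv)
  also have "\<dots> = (\<Sum>s<p+m. min (min (p + m - s - 1) p) (min m (s+1)) * 2^s)"
    by (rule sum.cong[OF refl]) (metis card_c lessThan_iff)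
  also have "\<dots> = (\<Sum>j=1..q. min (min (j - 1) p) (min m (q + 1 - j)) * 2 ^ (q - j))"
    by (rule sum.reindex_bij_witness[of _ "\<lambda>j. q - j" "\<lambda>s. q - s"]) (auto simp: q)
  finally show ?thesis unfolding m_def .
qed

end
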